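(* Let $N \geq 5$ be an integer. For an integer $M$ with $0 \leq M \leq \binom{N}{2}$, the pair $(N,M)$ is non-feasible for the family of all line graphs if and only if $M$ belongs to one of the intervals \[\left[ \binom{N-t}{2} +\binom{t+2}{2}, \ \binom{N-t+1}{2}-1 \right] \quad \text{for some integer } t \text{ with } 1 \leq t < \frac{ -5 + \sqrt{8N +17}}{2}.\] (Thus the largest such $t$ is $\left\lfloor \frac{ -5 + \sqrt{8N +17}}{2} \right\rfloor$ if $\frac{ -5 + \sqrt{8N +17}}{2}$ is not an integer, and $\frac{ -5 + \sqrt{8N +17}}{2}-1$ if it is an integer.)
   Context: All graphs are finite and simple. For a graph $G$, $L(G)$ denotes its line graph. For integers $N\ge 1$ and $0 \le M \le \binom{N}{2}$, the pair $(N,M)$ is called feasible (for the family of all line graphs) if there exists a graph $G$ such that $L(G)$ has exactly $N$ vertices and exactly $M$ edges; otherwise $(N,M)$ is non-feasible. For integers $a \le b$, $[a,b]$ denotes the set of integers $p$ with $a \le p \le b$. *)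

theory Defs
  imports Complex_Main
begin

text \<open>A finite simple graph G is represented by its edge set: a finite set of
  2-element vertex sets (vertices are natural numbers; isolated vertices of G are
  irrelevant for the line graph).\<close>

definition simple_edge_set :: "nat set set \<Rightarrow> bool" where
  "simple_edge_set E \<longleftrightarrow> finite E \<and> (\<forall>e\<in>E. card e = 2)"

definition line_graph_edges :: "nat set set \<Rightarrow> nat set set set" where
  "line_graph_edges E = {{e, f} | e f. e \<in> E \<and> f \<in> E \<and> e \<noteq> f \<and> e \<inter> f \<noteq> {}}"

definition feasible_line :: "nat \<Rightarrow> nat \<Rightarrow> bool" where
  "feasible_line N M \<longleftrightarrow>
     (\<exists>E. simple_edge_set E \<and> card E = N \<and> card (line_graph_edges E) = M)"

end

theory Submission
  imports Defs
begin


definition deg :: "nat set set \<Rightarrow> nat \<Rightarrow> nat" where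
  "deg E x = card {e\<in>E. x \<in> e}"

lemma double_count:
  assumes "finite L" "finite H"
  shows "(\<Sum>x\<in>L. card {e\<in>H. x \<in> e}) = (\<Sum>e\<in>H. card (e \<inter> L))"
proof -
  have 1: "card {e\<in>H. x \<in> e} = (\<Sum>e\<in>H. if x \<in> e then 1 else 0)" for x
    using sum.inter_filter[OF assms(2), of "\<lambda>_. 1::nat" "\<lambda>e. x \<in> e"] by simp
  have 2: "card (e \<inter> L) = (\<Sum>x\<in>L. if x \<in> e then 1 else 0)" for e
  proof -
    have "e \<inter> L = {x\<in>L. x \<in> e}" by blast
    then show ?thesis using sum.inter_filter[OF assms(1), of "\<lambda>_. 1::nat" "\<lambda>x. x \<in> e"] by simp
  qed
  show ?thesis unfolding 1 2 by (rule sum.swap)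
qed

lemma two_elem:
  assumes "card e = 2" "i \<in> e" "j \<in> e" "i \<noteq> j"
  shows "e = {i,j}"
proof -
  have "finite e" using assms(1) by (metis card.infinite zero_neq_numeral)
  moreover have "{i,j} \<subseteq> e" using assms by auto
  moreover have "card {i,j} = card e" using assms by simp
  ultimately show ?thesis by (metis card_subset_eq)
qed

lemma LG_eq:
  assumes "\<Union>E \<subseteq> V"
  shows "line_graph_edges E = (\<Union>x\<in>V. {S. S \<subseteq> {e\<in>E. x \<in> e} \<and> card S = 2})"
proof
  show "line_graph_edges E \<subseteq> (\<Union>x\<in>V. {S. S \<subseteq> {e\<in>E. x \<in> e} \<and> card S = 2})"
  proof
    fix S assume "S \<in> line_graph_edges E"
    then obtain e f where S: "S = {e,f}" "e \<in> E" "f \<in> E" "e \<noteq> f" "e \<inter> f \<noteq> {}"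
      unfolding line_graph_edges_def by blast
    then obtain x where "x \<in> e" "x \<in> f" by blast
    then show "S \<in> (\<Union>x\<in>V. {S. S \<subseteq> {e\<in>E. x \<in> e} \<and> card S = 2})"
      using S assms by (intro UN_I[of x]) auto
  qed
next
  show "(\<Union>x\<in>V. {S. S \<subseteq> {e\<in>E. x \<in> e} \<and> card S = 2}) \<subseteq> line_graph_edges E"
  proof
    fix S assume "S \<in> (\<Union>x\<in>V. {S. S \<subseteq> {e\<in>E. x \<in> e} \<and> card S = 2})"
    then obtain x where x: "S \<subseteq> {e\<in>E. x \<in> e}" "card S = 2" by blast
    then obtain e f where "S = {e,f}" "e \<noteq> f" by (meson card_2_iff)
    then show "S \<in> line_graph_edges E" using x unfolding line_graph_edges_def by blast
  qed
qed

lemma DF: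
  assumes "finite E" "\<forall>e\<in>E. card e = 2" "finite V" "\<Union>E \<subseteq> V"
  shows "card (line_graph_edges E) = (\<Sum>x\<in>V. deg E x choose 2)"
proof -
  have "card (line_graph_edges E) = (\<Sum>x\<in>V. card {S. S \<subseteq> {e\<in>E. x \<in> e} \<and> card S = 2})"
    unfolding LG_eq[OF assms(4)]
  proof (rule card_UN_disjoint[OF assms(3)])
    show "\<forall>i\<in>V. finite {S. S \<subseteq> {e \<in> E. i \<in> e} \<and> card S = 2}"
      using assms(1) by auto
    show "\<forall>i\<in>V. \<forall>j\<in>V. i \<noteq> j \<longrightarrow>
      {S. S \<subseteq> {e \<in> E. i \<in> e} \<and> card S = 2} \<inter> {S. S \<subseteq> {e \<in> E. j \<in> e} \<and> card S = 2} = {}"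
    proof (intro ballI impI)
      fix i j assume "i \<in> V" "j \<in> V" "i \<noteq> j"
      show "{S. S \<subseteq> {e \<in> E. i \<in> e} \<and> card S = 2} \<inter> {S. S \<subseteq> {e \<in> E. j \<in> e} \<and> card S = 2} = {}"
      proof (rule ccontr)
        assume "\<not> ?thesis"
        then obtain S where S: "S \<subseteq> {e \<in> E. i \<in> e}" "S \<subseteq> {e \<in> E. j \<in> e}" "card S = 2" by blast
        then obtain e f where ef: "S = {e,f}" "e \<noteq> f" by (meson card_2_iff)
        have "e = {i,j}" "f = {i,j}"
          using ef S assms(2) \<open>i \<noteq> j\<close> two_elem[of _ i j] by auto
        then show False using ef by simp
      qed
    qed
  qed
  also have "\<dots> = (\<Sum>x\<in>V. deg E x choose 2)"
    unfolding deg_def by (rule sum.cong) (auto intro: n_subsets simp: assms(1))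
  finally show ?thesis .
qed

lemma choose2_Suc: "Suc d choose 2 = (d choose 2) + d"
  by (simp add: numeral_2_eq_2)

lemma star_lemma:
  assumes H: "finite H" "\<forall>e\<in>H. card e = 2" and L: "finite L" "v \<notin> L" and v: "v \<notin> \<Union>H"
  shows "card (line_graph_edges ((\<lambda>w. {v,w}) ` L \<union> H))
       = (card L choose 2) + card (line_graph_edges H) + (\<Sum>e\<in>H. card (e \<inter> L))"
proof -
  define S where "S = (\<lambda>w. {v,w}) ` L"
  define V where "V = insert v (L \<union> \<Union>H)"
  have finH: "finite (\<Union>H)" using H by (metis card.infinite finite_Union zero_neq_numeral)
  have finV: "finite V" unfolding V_def using finH L by auto
  have injS: "inj_on (\<lambda>w. {v,w}) L" using L by (auto simp: inj_on_def doubleton_eq_iff)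
  have cS: "card S = card L" unfolding S_def using card_image[OF injS] .
  have G2: "\<forall>e\<in>S \<union> H. card e = 2" using H L unfolding S_def by (auto simp: card_insert_if)
  have finG: "finite (S \<union> H)" using H L unfolding S_def by auto
  have sub: "\<Union>(S \<union> H) \<subseteq> V" unfolding S_def V_def by auto
  have subH: "\<Union>H \<subseteq> V" unfolding V_def by auto
  have dv: "deg (S \<union> H) v = card L"
  proof -
    have "{e \<in> S \<union> H. v \<in> e} = S" using v unfolding S_def by auto
    then show ?thesis unfolding deg_def using cS by simp
  qed
  have dHv: "deg H v = 0" proof - have e: "{e \<in> H. v \<in> e} = {}" using v by auto show ?thesis unfolding deg_def e by simp qed
  have dx: "deg (S \<union> H) x = deg H x + (if x \<in> L then 1 else 0)" if "x \<noteq> v" for x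
  proof -
    have "{e \<in> S \<union> H. x \<in> e} = {e \<in> S. x \<in> e} \<union> {e \<in> H. x \<in> e}" by auto
    moreover have "{e \<in> S. x \<in> e} = (if x \<in> L then {{v,x}} else {})"
      using that unfolding S_def by auto
    moreover have "{e \<in> S. x \<in> e} \<inter> {e \<in> H. x \<in> e} = {}" using v unfolding S_def by auto
    moreover have "finite {e \<in> H. x \<in> e}" using H by auto
    ultimately show ?thesis unfolding deg_def
      by (simp add: card_Un_disjoint)
  qed
  have vn: "v \<notin> L \<union> \<Union>H" using L v by auto
  have "card (line_graph_edges (S \<union> H)) = (\<Sum>x\<in>V. deg (S \<union> H) x choose 2)"
    by (rule DF[OF finG G2 finV sub])
  also have "\<dots> = (card L choose 2) + (\<Sum>x\<in>L \<union> \<Union>H. deg (S \<union> H) x choose 2)"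
    unfolding V_def using finH L vn dv by (simp add: sum.insert)
  also have "(\<Sum>x\<in>L \<union> \<Union>H. deg (S \<union> H) x choose 2)
      = (\<Sum>x\<in>L \<union> \<Union>H. (deg H x choose 2) + (if x \<in> L then deg H x else 0))"
  proof (rule sum.cong[OF refl])
    fix x assume "x \<in> L \<union> \<Union>H"
    then have "x \<noteq> v" using vn by auto
    then show "deg (S \<union> H) x choose 2 = (deg H x choose 2) + (if x \<in> L then deg H x else 0)"
      using dx choose2_Suc by simp
  qed
  also have "\<dots> = (\<Sum>x\<in>L \<union> \<Union>H. deg H x choose 2) + (\<Sum>x\<in>L. deg H x)"
    using finH L by (simp add: sum.distrib sum.If_cases Int_absorb2)
  also have "(\<Sum>x\<in>L \<union> \<Union>H. deg H x choose 2) = card (line_graph_edges H)"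
  proof -
    have "card (line_graph_edges H) = (\<Sum>x\<in>V. deg H x choose 2)"
      by (rule DF[OF H finV subH])
    also have "\<dots> = (\<Sum>x\<in>L \<union> \<Union>H. deg H x choose 2)"
      unfolding V_def using finH L vn dHv by (simp add: sum.insert)
    finally show ?thesis by simp
  qed
  also have "(\<Sum>x\<in>L. deg H x) = (\<Sum>e\<in>H. card (e \<inter> L))"
    unfolding deg_def by (rule double_count[OF L(1) H(1)])
  finally show ?thesis unfolding S_def by simp
qed

lemma two_choose2: "2 * (n choose 2) = n * (n - 1)"
proof (induction n)
  case 0 then show ?case by simp
next
  case (Suc n) then show ?case unfolding choose2_Suc by (cases n) (simp_all add: algebra_simps)
qed

lemma M_le_choose:
  assumes "finite H"
  shows "card (line_graph_edges H) \<le> card H choose 2"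
proof -
  have "line_graph_edges H \<subseteq> {S. S \<subseteq> H \<and> card S = 2}"
    unfolding line_graph_edges_def by (auto simp: card_2_iff)
  moreover have "finite {S. S \<subseteq> H \<and> card S = 2}" using assms by auto
  ultimately have "card (line_graph_edges H) \<le> card {S. S \<subseteq> H \<and> card S = 2}"
    by (rule card_mono[rotated])
  then show ?thesis using n_subsets[OF assms] by simp
qed

lemma finite_Un_edges:
  assumes "finite E" "\<forall>e\<in>E. card e = 2"
  shows "finite (\<Union>E)"
  using assms by (metis card.infinite finite_Union zero_neq_numeral)

lemma handshake:
  assumes "finite E" "\<forall>e\<in>E. card e = 2"
  shows "(\<Sum>x\<in>\<Union>E. deg E x) = 2 * card E"
proof -
  have "(\<Sum>x\<in>\<Union>E. deg E x) = (\<Sum>e\<in>E. card (e \<inter> \<Union>E))"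
    unfolding deg_def by (rule double_count[OF finite_Un_edges[OF assms] assms(1)])
  also have "\<dots> = (\<Sum>e\<in>E. 2)"
  proof (rule sum.cong[OF refl])
    fix e assume "e \<in> E"
    then have "e \<inter> \<Union>E = e" by blast
    then show "card (e \<inter> \<Union>E) = 2" using assms(2) \<open>e \<in> E\<close> by simp
  qed
  finally show ?thesis by simp
qed

lemma M_le_maxdeg:
  assumes "finite E" "\<forall>e\<in>E. card e = 2" "\<forall>x. deg E x \<le> D"
  shows "card (line_graph_edges E) \<le> card E * (D - 1)"
proof -
  have "card (line_graph_edges E) = (\<Sum>x\<in>\<Union>E. deg E x choose 2)"
    using DF[OF assms(1,2) finite_Un_edges[OF assms(1,2)]] by simp
  then have "2 * card (line_graph_edges E) = (\<Sum>x\<in>\<Union>E. 2 * (deg E x choose 2))"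
    by (simp add: sum_distrib_left)
  also have "\<dots> \<le> (\<Sum>x\<in>\<Union>E. deg E x * (D - 1))"
  proof (rule sum_mono)
    fix x
    have "2 * (deg E x choose 2) = deg E x * (deg E x - 1)"
      by (rule two_choose2)
    also have "\<dots> \<le> deg E x * (D - 1)" using assms(3) by (intro mult_le_mono2) (simp add: diff_le_mono)
    finally show "2 * (deg E x choose 2) \<le> deg E x * (D - 1)" .
  qed
  also have "\<dots> = 2 * card E * (D - 1)"
    using handshake[OF assms(1,2)] by (simp add: sum_distrib_right[symmetric])
  finally show ?thesis by simp
qed

lemma M_ge_deg:
  assumes "finite E" "\<forall>e\<in>E. card e = 2"
  shows "(deg E v choose 2) \<le> card (line_graph_edges E)"
proof (cases "v \<in> \<Union>E")
  case True
  have "card (line_graph_edges E) = (\<Sum>x\<in>\<Union>E. deg E x choose 2)"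
    using DF[OF assms(1,2) finite_Un_edges[OF assms(1,2)]] by simp
  moreover have "(deg E v choose 2) \<le> (\<Sum>x\<in>\<Union>E. deg E x choose 2)"
    by (rule member_le_sum[OF True]) (auto simp: finite_Un_edges[OF assms(1,2)])
  ultimately show ?thesis by simp
next
  case False
  then have e: "{e\<in>E. v \<in> e} = {}" by auto
  have "deg E v = 0" unfolding deg_def e by simp
  then show ?thesis by (simp add: numeral_2_eq_2)
qed

lemma M_upper_star:
  assumes "finite E" "\<forall>e\<in>E. card e = 2"
  shows "card (line_graph_edges E) \<le> (deg E v choose 2) + ((card E - deg E v) choose 2) + 2 * (card E - deg E v)"
proof -
  define L where "L = {w. {v,w} \<in> E}"
  define H where "H = {e\<in>E. v \<notin> e}"
  have vL: "v \<notin> L" unfolding L_def using assms(2) by force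
  have Sim: "(\<lambda>w. {v,w}) ` L = {e\<in>E. v \<in> e}"
  proof
    show "(\<lambda>w. {v,w}) ` L \<subseteq> {e\<in>E. v \<in> e}" unfolding L_def by auto
    show "{e\<in>E. v \<in> e} \<subseteq> (\<lambda>w. {v,w}) ` L"
    proof
      fix e assume e: "e \<in> {e\<in>E. v \<in> e}"
      then have "card e = 2" using assms(2) by auto
      then obtain a b where ab: "e = {a,b}" "a \<noteq> b" by (meson card_2_iff)
      then have "e = {v, if a = v then b else a}" using e by auto
      then show "e \<in> (\<lambda>w. {v,w}) ` L" using e unfolding L_def by (intro image_eqI) auto
    qed
  qed
  have injS: "inj_on (\<lambda>w. {v,w}) L" using vL by (auto simp: inj_on_def doubleton_eq_iff)
  have finE2: "finite {e\<in>E. v \<in> e}" using assms(1) by auto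
  have finL: "finite L" using finite_imageD[of "\<lambda>w. {v,w}" L] Sim injS finE2 by simp
  have cL: "card L = deg E v" unfolding deg_def using card_image[OF injS] Sim by simp
  have Eeq: "E = (\<lambda>w. {v,w}) ` L \<union> H" unfolding Sim H_def by auto
  have finH: "finite H" unfolding H_def using assms(1) by auto
  have H2: "\<forall>e\<in>H. card e = 2" unfolding H_def using assms(2) by auto
  have vH: "v \<notin> \<Union>H" unfolding H_def by auto
  have cH: "card H = card E - deg E v"
  proof -
    have "E = {e\<in>E. v \<in> e} \<union> H" "{e\<in>E. v \<in> e} \<inter> H = {}" unfolding H_def by auto
    then have "card E = deg E v + card H" unfolding deg_def
      using card_Un_disjoint[OF finE2 finH] by simp
    then show ?thesis by simp
  qed
  have "card (line_graph_edges E) = (card L choose 2) + card (line_graph_edges H) + (\<Sum>e\<in>H. card (e \<inter> L))"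
    unfolding Eeq by (rule star_lemma[OF finH H2 finL vL vH])
  also have "(\<Sum>e\<in>H. card (e \<inter> L)) \<le> (\<Sum>e\<in>H. 2)"
  proof (rule sum_mono)
    fix e assume "e \<in> H"
    then have "card e = 2" "finite e" using H2 by (auto simp: card_ge_0_finite)
    then show "card (e \<inter> L) \<le> 2" by (metis card_mono inf_le1)
  qed
  also have "card (line_graph_edges H) \<le> card H choose 2" by (rule M_le_choose[OF finH])
  finally show ?thesis using cL cH by simp
qed

lemma sum_pairs: "(\<Sum>i<n. g (c + 2*i) + g (c + 2*i + 1)) = (\<Sum>k<2*n. g (c + k) :: nat)" for n c :: nat
  by (induction n) (simp_all add: algebra_simps)

lemma sum_shift: "(\<Sum>k<j. g k) + (\<Sum>k<m. g (j + k)) = (\<Sum>k<j+m. g k :: nat)" for j m :: nat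
  by (induction m) simp_all

lemma sum_ind: "(\<Sum>k<n. if k < q then 1 else 0) = min n (q::nat)"
  by (induction n) auto

lemma construct:
  assumes a: "1 \<le> a" and js: "j \<le> s" and q1: "q \<le> 2*s - j" and q2: "q < a"
  shows "feasible_line (a + s) ((a choose 2) + (j choose 2) + j + q)"
proof -
  define p where "p k = (if k < q then k + 2 else a + 2 + k)" for k
  define f :: "nat \<Rightarrow> nat" where "f k = (if k < q then 1 else 0)" for k
  define L where "L = {1..a}"
  define Y where "Y = p ` {..<j}"
  define S where "S = (\<lambda>w. {0::nat,w}) ` L"
  define S' where "S' = (\<lambda>y. {1::nat,y}) ` Y"
  define H' where "H' = (\<lambda>i. {p (j+2*i), p (j+2*i+1)}) ` {..<s-j}"
  define H where "H = S' \<union> H'"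
  have injp: "inj p" unfolding inj_def p_def using q2 by auto
  have p2: "p k \<ge> 2" for k unfolding p_def by auto
  have p01: "p k \<noteq> 0" "p k \<noteq> 1" "0 \<noteq> p k" "1 \<noteq> p k" "Suc 0 \<noteq> p k" "p k \<noteq> Suc 0" for k using p2[of k] by auto
  have pL: "p k \<in> L \<longleftrightarrow> k < q" for k unfolding p_def L_def using q2 by auto
  have pne: "p k = p k' \<longleftrightarrow> k = k'" for k k' using injp by (auto simp: inj_def)
  have finL: "finite L" "card L = a" "0 \<notin> L" unfolding L_def by auto
  have finY: "finite Y" "card Y = j" "1 \<notin> Y" unfolding Y_def using p2 card_image[of p "{..<j}"] injp
    by (auto simp: inj_on_def pne p01)
  have H'2: "\<forall>e\<in>H'. card e = 2" unfolding H'_def by (auto simp: pne)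
  have finH': "finite H'" unfolding H'_def by simp
  have oneH': "1 \<notin> \<Union>H'" unfolding H'_def using p01 by auto
  have LH': "line_graph_edges H' = {}"
    unfolding line_graph_edges_def H'_def by (auto simp: pne) presburger+
  have YH': "(\<Sum>e\<in>H'. card (e \<inter> Y)) = 0"
  proof -
    have "e \<inter> Y = {}" if "e \<in> H'" for e using that unfolding H'_def Y_def by (auto simp: pne)
    then show ?thesis by simp
  qed
  have S'2: "\<forall>e\<in>S'. card e = 2" unfolding S'_def using finY by (auto simp: card_insert_if)
  have finS': "finite S'" unfolding S'_def using finY by simp
  have finH: "finite H" "\<forall>e\<in>H. card e = 2" unfolding H_def using finS' finH' S'2 H'2 by auto
  have zH: "0 \<notin> \<Union>H" unfolding H_def S'_def H'_def Y_def by (auto simp: p01)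
  have MH: "card (line_graph_edges H) = (j choose 2)"
    unfolding H_def S'_def using star_lemma[OF finH' H'2 finY(1) finY(3) oneH'] LH' YH' finY by simp
  have disj: "S' \<inter> H' = {}" using oneH' unfolding S'_def by auto
  have sumS': "(\<Sum>e\<in>S'. card (e \<inter> L)) = (\<Sum>i<j. 1 + f i)"
  proof -
    have "S' = (\<lambda>i. {1, p i}) ` {..<j}" unfolding S'_def Y_def by auto
    moreover have "inj_on (\<lambda>i. {1::nat, p i}) {..<j}"
      by (auto simp: inj_on_def doubleton_eq_iff pne p01)
    moreover have "card ({1, p i} \<inter> L) = 1 + f i" for i
    proof (cases "i < q")
      case True
      then have "{1, p i} \<inter> L = {1, p i}" using pL finL a unfolding L_def by auto
      then show ?thesis using True p2[of i] unfolding f_def by (simp add: card_insert_if)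
    next
      case False
      then have "{1, p i} \<inter> L = {1}" using pL a unfolding L_def by auto
      then show ?thesis using False unfolding f_def by simp
    qed
    ultimately show ?thesis by (simp add: sum.reindex)
  qed
  have sumH': "(\<Sum>e\<in>H'. card (e \<inter> L)) = (\<Sum>i<s-j. f (j+2*i) + f (j+2*i+1))"
  proof -
    have "inj_on (\<lambda>i. {p (j+2*i), p (j+2*i+1)}) {..<s-j}"
      by (auto simp: inj_on_def doubleton_eq_iff pne)
    moreover have "card ({x, y} \<inter> L) = (if x \<in> L then 1 else 0) + (if y \<in> L then 1 else 0)"
      if "x \<noteq> y" for x y using that by (auto simp: card_insert_if)
    ultimately show ?thesis unfolding H'_def by (simp add: sum.reindex pne pL f_def)
  qed
  have "(\<Sum>e\<in>H. card (e \<inter> L)) = (\<Sum>e\<in>S'. card (e \<inter> L)) + (\<Sum>e\<in>H'. card (e \<inter> L))"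
    unfolding H_def by (rule sum.union_disjoint[OF finS' finH' disj])
  also have "\<dots> = j + ((\<Sum>k<j. f k) + (\<Sum>k<2*(s-j). f (j+k)))"
    unfolding sumS' sumH' sum_pairs by (subst sum.distrib) simp
  also have "\<dots> = j + q"
  proof -
    have e: "j + 2*(s-j) = 2*s - j" using js by simp
    have "(\<Sum>k<2*s - j. f k) = min (2*s - j) q" unfolding f_def by (rule sum_ind)
    then show ?thesis unfolding sum_shift e using q1 by simp
  qed
  finally have sumH: "(\<Sum>e\<in>H. card (e \<inter> L)) = j + q" .
  have ME: "card (line_graph_edges (S \<union> H)) = (a choose 2) + (j choose 2) + j + q"
    unfolding S_def using star_lemma[OF finH finL(1) finL(3) zH] MH sumH finL by simp
  have cardH': "card H' = s - j" unfolding H'_def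
    by (subst card_image) (auto simp: inj_on_def doubleton_eq_iff pne)
  have cardS': "card S' = j" unfolding S'_def using finY
    by (subst card_image) (auto simp: inj_on_def doubleton_eq_iff)
  have cardS: "card S = a" unfolding S_def using finL
    by (subst card_image) (auto simp: inj_on_def doubleton_eq_iff)
  have disjSH: "S \<inter> H = {}" using zH unfolding S_def by auto
  have finS: "finite S" unfolding S_def using finL by simp
  have cardE: "card (S \<union> H) = a + s"
    using card_Un_disjoint[OF finS finH(1) disjSH] card_Un_disjoint[OF finS' finH' disj] cardS cardS' cardH' js
    unfolding H_def by simp
  have "simple_edge_set (S \<union> H)" unfolding simple_edge_set_def
    using finS finH finL unfolding S_def by (auto simp: card_insert_if) (metis gr0I)
  then show ?thesis unfolding feasible_line_def using cardE ME by blast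
qed



lemma c2: "2 * int (n choose 2) = int n * (int n - 1)"
proof (induction n)
  case 0 then show ?case by simp
next
  case (Suc n)
  have "Suc n choose 2 = (n choose 2) + n" by (simp add: numeral_2_eq_2)
  then show ?case using Suc by (simp add: algebra_simps)
qed

lemma cond_iff: "real t < (-5 + sqrt (8 * real N + 17)) / 2 \<longleftrightarrow> t*t + 5*t + 2 < 2*N"
proof -
  have aux: "4*X < 8*Y \<longleftrightarrow> X < 2*Y" for X Y :: nat by linarith
  have "real t < (-5 + sqrt (8 * real N + 17)) / 2 \<longleftrightarrow> 2 * real t + 5 < sqrt (8 * real N + 17)"
    by auto
  also have "\<dots> \<longleftrightarrow> (2 * real t + 5)^2 < 8 * real N + 17"
  proof -
    have "sqrt ((2 * real t + 5)^2) = 2 * real t + 5" by simp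
    then show ?thesis by (metis real_sqrt_less_iff)
  qed
  also have "\<dots> \<longleftrightarrow> real (4*(t*t + 5*t + 2)) < real (8 * N)"
    by (simp add: power2_eq_square algebra_simps)
  also have "\<dots> \<longleftrightarrow> t*t + 5*t + 2 < 2*N" by (simp only: of_nat_less_iff aux)
  finally show ?thesis .
qed

lemma numA:
  fixes N M t D :: nat
  assumes t1: "1 \<le> t" and tc: "t*t + 5*t + 2 < 2*N"
    and g1: "(N - t choose 2) + (t + 2 choose 2) \<le> M" and g2: "M + 1 \<le> (N - t + 1 choose 2)"
    and m1: "(D choose 2) \<le> M"
    and m2: "M \<le> (D choose 2) + (N - D choose 2) + 2 * (N - D)"
    and m3: "M \<le> N * (D - 1)" and dN: "D \<le> N" and d1: "1 \<le> D"
  shows False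
proof -
  have "t \<le> t * t" using t1 by simp
  then have tN: "t < N" using tc by linarith
  define n where "n = int N"
  define x where "x = int t"
  define d where "d = int D"
  define m where "m = int M"
  have e1: "2 * int (N - t choose 2) = (n - x) * (n - x - 1)" using c2[of "N-t"] tN unfolding n_def x_def by simp
  have e2: "2 * int (t + 2 choose 2) = (x + 2) * (x + 1)" using c2[of "t+2"] unfolding x_def by (simp add: algebra_simps)
  have e3: "2 * int (N - t + 1 choose 2) = (n - x + 1) * (n - x)" using c2[of "N-t+1"] tN unfolding n_def x_def by simp
  have e4: "2 * int (D choose 2) = d * (d - 1)" using c2[of D] unfolding d_def by simp
  have e5: "2 * int (N - D choose 2) = (n - d) * (n - d - 1)" using c2[of "N-D"] dN unfolding n_def d_def by simp
  have G1: "(n - x) * (n - x - 1) + (x + 2) * (x + 1) \<le> 2 * m"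
    using g1 e1 e2 unfolding m_def by linarith
  have G2: "2 * m + 2 \<le> (n - x + 1) * (n - x)" using g2 e3 unfolding m_def by linarith
  have M1: "d * (d - 1) \<le> 2 * m" using m1 e4 unfolding m_def by linarith
  have M2: "2 * m \<le> d * (d - 1) + (n - d) * (n - d - 1) + 4 * (n - d)"
  proof -
    have "int M \<le> int ((D choose 2) + (N - D choose 2) + 2 * (N - D))" using m2 by (simp only: of_nat_le_iff)
    then have "int M \<le> int (D choose 2) + int (N - D choose 2) + 2 * (int N - int D)"
      using dN by (simp add: of_nat_diff)
    then show ?thesis using e4 e5 unfolding m_def n_def d_def by linarith
  qed
  have M3: "m \<le> n * (d - 1)" using m3 d1 unfolding m_def n_def d_def
    by (metis of_nat_1 of_nat_diff of_nat_le_iff of_nat_mult)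
  have tc': "x * x + 5 * x + 2 < 2 * n" using tc unfolding x_def n_def by (metis of_nat_add of_nat_less_iff of_nat_mult of_nat_numeral)
  have x1: "1 \<le> x" using t1 unfolding x_def by simp
  show False
  proof (cases "d \<ge> n - x + 1")
    case True
    have "(n - x + 1) * (n - x) \<le> d * (d - 1)"
      using True tN unfolding n_def x_def by (intro mult_mono) auto
    then show False using G2 M1 by linarith
  next
    case False
    show False
    proof (cases "d \<ge> x + 2")
      case True
      have "(n - d - x) * (n - d + x + 2 - n) \<le> 0"
        using True False by (intro mult_nonneg_nonpos) auto
      then show False using G1 M2 by (simp add: algebra_simps)
    next
      case False
      have n4: "n \<ge> 4 * x + 1"
      proof (cases "x \<ge> 3")
        case True
        then have "x * x \<ge> 3 * x" by (intro mult_right_mono) auto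
        then show ?thesis using tc' by linarith
      next
        case False
        then have "x = 1 \<or> x = 2" using x1 by auto
        then show ?thesis using tc' by auto
      qed
      have "n * (d - 1) \<le> n * x" using False n4 x1 by (intro mult_left_mono) auto
      then have "m \<le> n * x" using M3 by linarith
      have "n * (4 * x + 1) \<le> n * n" using n4 unfolding n_def by (intro mult_left_mono) auto
      moreover have "0 \<le> x * x" by simp
      moreover have "(n - x) * (n - x - 1) + (x + 2) * (x + 1) = n*n - 2*(n*x) - n + 2*(x*x) + 4*x + 2"
        by (simp add: algebra_simps)
      moreover have "n * (4*x+1) = 4*(n*x) + n" by (simp add: algebra_simps)
      ultimately show False using G1 \<open>m \<le> n * x\<close> x1 by linarith
    qed
  qed
qed


lemma exist_max:
  assumes "f 0 \<le> (r::nat)"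
  shows "\<exists>j\<le>s. f j \<le> r \<and> (j < s \<longrightarrow> r < f (Suc j))"
proof (induction s)
  case 0 then show ?case using assms by auto
next
  case (Suc s)
  then obtain j where j: "j \<le> s" "f j \<le> r" "j < s \<longrightarrow> r < f (Suc j)" by blast
  show ?case
  proof (cases "j < s \<or> r < f (Suc s)")
    case True then show ?thesis using j by (intro exI[of _ j]) auto
  next
    case False then show ?thesis using j by (intro exI[of _ "Suc s"]) auto
  qed
qed

theorem theorem1:
  fixes N M :: nat
  assumes "N \<ge> 5" and "M \<le> N choose 2"
  shows "\<not> feasible_line N M \<longleftrightarrow>
    (\<exists>t::nat. 1 \<le> t \<and> real t < (-5 + sqrt (8 * real N + 17)) / 2 \<and>
       ((N - t) choose 2) + ((t + 2) choose 2) \<le> M \<and>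
       M \<le> ((N - t + 1) choose 2) - 1)"
proof
  assume nf: "\<not> feasible_line N M"
  show "\<exists>t::nat. 1 \<le> t \<and> real t < (-5 + sqrt (8 * real N + 17)) / 2 \<and>
       ((N - t) choose 2) + ((t + 2) choose 2) \<le> M \<and>
       M \<le> ((N - t + 1) choose 2) - 1"
  proof (rule ccontr)
    assume ng: "\<not> (\<exists>t::nat. 1 \<le> t \<and> real t < (-5 + sqrt (8 * real N + 17)) / 2 \<and>
       ((N - t) choose 2) + ((t + 2) choose 2) \<le> M \<and>
       M \<le> ((N - t + 1) choose 2) - 1)"
    obtain k where k: "k \<le> N - 1" "Suc k choose 2 \<le> M" "k < N - 1 \<longrightarrow> M < Suc (Suc k) choose 2"
      using exist_max[of "\<lambda>k. Suc k choose 2" M "N - 1"] by (auto simp: numeral_2_eq_2)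
    define a where "a = Suc k"
    define s where "s = N - a"
    define r where "r = M - (a choose 2)"
    have aN: "a \<le> N" "1 \<le> a" "a + s = N" using k assms(1) unfolding a_def s_def by auto
    have Mr: "M = (a choose 2) + r" using k(2) unfolding r_def a_def by simp
    have ra: "r < a"
    proof (cases "k < N - 1")
      case True
      then have "M < (a choose 2) + a" using k(3) choose2_Suc[of a] unfolding a_def by simp
      then show ?thesis using Mr by simp
    next
      case False
      then have "a = N" using k aN unfolding a_def by simp
      then show ?thesis using assms(2) Mr aN by simp
    qed
    obtain j where j: "j \<le> s" "Suc j choose 2 \<le> r" "j < s \<longrightarrow> r < Suc (Suc j) choose 2"
      using exist_max[of "\<lambda>k. Suc k choose 2" r s] by (auto simp: numeral_2_eq_2)
    define q where "q = r - (Suc j choose 2)"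
    have rq: "r = (j choose 2) + j + q" using j(2) choose2_Suc[of j] unfolding q_def by simp
    have qa: "q < a" using ra rq by simp
    have qs: "q \<le> 2 * s - j"
    proof (cases "j < s")
      case True
      then have "r < (j choose 2) + j + Suc j" using j(3) choose2_Suc[of j] choose2_Suc[of "Suc j"] by simp
      then show ?thesis using rq True by simp
    next
      case False
      then have js: "j = s" using j by simp
      show ?thesis
      proof (rule ccontr)
        assume "\<not> q \<le> 2 * s - j"
        then have qs': "q \<ge> s + 1" using js by simp
        have r2: "(s + 2 choose 2) \<le> r"
          using rq js qs' choose2_Suc[of s] choose2_Suc[of "Suc s"] by (simp add: numeral_2_eq_2)
        have s1: "1 \<le> s"
        proof (rule ccontr)
          assume "\<not> 1 \<le> s"
          then have "s = 0" by simp
          then have "a = N" using aN by simp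
          then have "r = 0" using assms(2) Mr by simp
          then show False using r2 \<open>s = 0\<close> by simp
        qed
        have "a < N" using s1 aN by simp
        then have kl: "k < N - 1" unfolding a_def by simp
        have Mlt: "M < (a + 1 choose 2)" using k(3) kl unfolding a_def by simp
        have e: "2 * (s + 2 choose 2) = s * s + 3 * s + 2"
          using two_choose2[of "s+2"] by (simp add: algebra_simps)
        have "s * s + 5 * s + 2 < 2 * N" using r2 ra e aN by linarith
        then have c1: "real s < (-5 + sqrt (8 * real N + 17)) / 2" using cond_iff by blast
        have Ns: "N - s = a" using aN by simp
        have c2': "((N - s) choose 2) + ((s + 2) choose 2) \<le> M" unfolding Ns using Mr r2 by simp
        have c3: "M \<le> ((N - s + 1) choose 2) - 1" unfolding Ns using Mlt by simp
        show False using ng s1 c1 c2' c3 by blast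
      qed
    qed
    have "feasible_line (a + s) ((a choose 2) + (j choose 2) + j + q)"
      by (rule construct[OF aN(2) j(1) qs qa])
    then have "feasible_line N M" using aN Mr rq by (simp add: add.assoc)
    then show False using nf by simp
  qed
next
  assume "\<exists>t::nat. 1 \<le> t \<and> real t < (-5 + sqrt (8 * real N + 17)) / 2 \<and>
       ((N - t) choose 2) + ((t + 2) choose 2) \<le> M \<and>
       M \<le> ((N - t + 1) choose 2) - 1"
  then obtain t where t1: "1 \<le> t" and tr: "real t < (-5 + sqrt (8 * real N + 17)) / 2"
    and g1: "((N - t) choose 2) + ((t + 2) choose 2) \<le> M"
    and g2: "M \<le> ((N - t + 1) choose 2) - 1" by blast
  have tc: "t * t + 5 * t + 2 < 2 * N" using tr cond_iff by blast
  have "t \<le> t * t" using t1 by simp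
  then have tN: "t < N" using tc by linarith
  have "0 < (N - t + 1) choose 2" using tN by (simp add: zero_less_binomial_iff)
  then have g2': "M + 1 \<le> (N - t + 1) choose 2" using g2 by linarith
  show "\<not> feasible_line N M"
  proof
    assume "feasible_line N M"
    then obtain E where E: "simple_edge_set E" "card E = N" "card (line_graph_edges E) = M"
      unfolding feasible_line_def by blast
    have fE: "finite E" and E2: "\<forall>e\<in>E. card e = 2" using E(1) unfolding simple_edge_set_def by auto
    define V where "V = \<Union>E"
    have fV: "finite V" unfolding V_def by (rule finite_Un_edges[OF fE E2])
    have "E \<noteq> {}" using E(2) assms(1) by auto
    then obtain e where "e \<in> E" by blast
    then have "card e = 2" using E2 by simp
    then obtain y z where "e = {y, z}" by (meson card_2_iff)
    then have "y \<in> V" using \<open>e \<in> E\<close> unfolding V_def by auto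
    then have Vne: "V \<noteq> {}" by auto
    define D where "D = Max (deg E ` V)"
    have "D \<in> deg E ` V" unfolding D_def using fV Vne by (intro Max_in) auto
    then obtain v where v: "v \<in> V" "deg E v = D" by auto
    have dle: "\<forall>x. deg E x \<le> D"
    proof
      fix x
      show "deg E x \<le> D"
      proof (cases "x \<in> V")
        case True then show ?thesis unfolding D_def using fV by auto
      next
        case False
        then have e0: "{e\<in>E. x \<in> e} = {}" unfolding V_def by auto
        show ?thesis unfolding deg_def e0 by simp
      qed
    qed
    have D1: "1 \<le> D"
    proof -
      have "{e\<in>E. v \<in> e} \<noteq> {}" using v(1) unfolding V_def by auto
      moreover have "finite {e\<in>E. v \<in> e}" using fE by simp
      ultimately have "0 < card {e\<in>E. v \<in> e}" by (simp only: card_gt_0_iff) simp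
      then show ?thesis using v(2) unfolding deg_def by simp
    qed
    have DN: "D \<le> N"
      using v(2) E(2) card_mono[OF fE, of "{e\<in>E. v \<in> e}"] unfolding deg_def by auto
    have m1: "(D choose 2) \<le> M" using M_ge_deg[OF fE E2, of v] v E by simp
    have m2: "M \<le> (D choose 2) + (N - D choose 2) + 2 * (N - D)"
      using M_upper_star[OF fE E2, of v] v E by simp
    have m3: "M \<le> N * (D - 1)" using M_le_maxdeg[OF fE E2 dle] E by simp
    show False by (rule numA[OF t1 tc g1 g2' m1 m2 m3 DN D1])
  qed
qed

end
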